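(* Let $A,B$ be real numbers with $A>2B>1$. Then the equation $x=A+B\log(1+x\log x)$ has a unique positive root $x^*=x^*(A,B)$, and it satisfies $$A+B\log(1+A\log A)\ <\ x^*\ <\ A+B\log(1+A\log A)\Bigl(1+\frac{2B}{A-2B}\Bigr).$$ *)

theory Defs
  imports Complex_Main
begin

end

theory Submission
  imports Defs
begin

lemma ln_lower: "t > 0 \<Longrightarrow> ln (t::real) \<ge> 1 - 1/t"
  using ln_le_minus_one[of "1/t"] by (simp add: ln_div)

lemma hdec:
  fixes a x :: real
  assumes "1 \<le> a" "a \<le> x"
  shows "1/x^2 + ln x / x \<le> 1/a^2 + ln a / a"
proof (rule DERIV_nonpos_imp_decreasing_open[OF assms(2)])
  fix t :: real assume t: "a < t" "t < x"
  hence tp: "t > 1" using assms by simp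
  have "DERIV (\<lambda>t. 1/t^2 + ln t / t) t :> (-2/t^3 + (1 - ln t)/t^2)"
    using tp by (auto intro!: derivative_eq_intros simp: field_simps power2_eq_square power3_eq_cube)
  moreover have "-2/t^3 + (1 - ln t)/t^2 \<le> 0"
  proof -
    have "ln t \<ge> 1 - 1/t" using tp ln_lower by simp
    hence "t * ln t \<ge> t * (1 - 1/t)" using tp by (intro mult_left_mono) auto
    hence "t - t * ln t - 2 \<le> 0" using tp by (simp add: algebra_simps)
    moreover have "-2/t^3 + (1 - ln t)/t^2 = (t - t * ln t - 2) / t^3" using tp
      by (simp add: field_simps power2_eq_square power3_eq_cube)
    ultimately show ?thesis using tp by (simp add: divide_nonpos_pos)
  qed
  ultimately show "\<exists>y. DERIV (\<lambda>t. 1/t^2 + ln t / t) t :> y \<and> y \<le> 0" by blast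
next
  show "continuous_on {a..x} (\<lambda>t. 1/t^2 + ln t / t)"
    using assms by (auto intro!: continuous_intros)
qed
lemma keyln_aux:
  fixes a x :: real
  assumes "1 \<le> a" "a \<le> x"
  shows "ln (1 + x * ln x) \<le> ln (1 + a * ln a) + 2 * ln (x / a)"
proof -
  have a0: "a > 0" and x0: "x > 0" using assms by auto
  have lx: "ln x \<ge> 0" "ln a \<ge> 0" using assms by auto
  have p1: "1 + x * ln x > 0" "1 + a * ln a > 0" using lx x0 a0 by (simp_all add: add_pos_nonneg)
  have "1/x^2 + ln x / x \<le> 1/a^2 + ln a / a" by (rule hdec[OF assms])
  hence "(1 + x * ln x) / x^2 \<le> (1 + a * ln a) / a^2" using a0 x0
    by (simp add: field_simps power2_eq_square)
  hence "1 + x * ln x \<le> (1 + a * ln a) * (x / a)^2" using a0 x0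
    by (simp add: field_simps power2_eq_square)
  hence "ln (1 + x * ln x) \<le> ln ((1 + a * ln a) * (x / a)^2)"
    using p1 by simp
  also have "\<dots> = ln (1 + a * ln a) + 2 * ln (x / a)"
    using p1 a0 x0 by (simp add: ln_mult ln_realpow)
  finally show ?thesis .
qed

lemma keyln:
  fixes a x :: real
  assumes "1 \<le> a" "a \<le> x"
  shows "ln (1 + x * ln x) \<le> ln (1 + a * ln a) + 2 * (x - a) / a"
proof -
  have a0: "a > 0" and x0: "x > 0" using assms by auto
  have lx: "ln x \<ge> 0" "ln a \<ge> 0" using assms by auto
  have p1: "1 + x * ln x > 0" "1 + a * ln a > 0" using lx x0 a0 by (simp_all add: add_pos_nonneg)
  have "1/x^2 + ln x / x \<le> 1/a^2 + ln a / a" by (rule hdec[OF assms])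
  hence "(1 + x * ln x) / x^2 \<le> (1 + a * ln a) / a^2" using a0 x0
    by (simp add: field_simps power2_eq_square)
  hence "1 + x * ln x \<le> (1 + a * ln a) * (x / a)^2" using a0 x0
    by (simp add: field_simps power2_eq_square)
  hence "ln (1 + x * ln x) \<le> ln ((1 + a * ln a) * (x / a)^2)"
    using p1 by simp
  also have "\<dots> = ln (1 + a * ln a) + 2 * ln (x / a)"
    using p1 a0 x0 by (simp add: ln_mult ln_realpow)
  also have "ln (x / a) \<le> x / a - 1" using a0 x0 by (intro ln_le_minus_one) simp
  hence "ln (1 + a * ln a) + 2 * ln (x / a) \<le> ln (1 + a * ln a) + 2 * (x - a) / a"
    using a0 by (simp add: field_simps)
  finally show ?thesis .
qed

lemma keyln_strict:
  fixes a x :: real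
  assumes "1 \<le> a" "a < x"
  shows "ln (1 + x * ln x) < ln (1 + a * ln a) + 2 * (x - a) / a"
proof -
  have a0: "a > 0" using assms by auto
  have "ln (1 + x * ln x) \<le> ln (1 + a * ln a) + 2 * ln (x / a)"
    using keyln_aux[OF assms(1)] assms by simp
  moreover have "ln (x / a) < x / a - 1"
    using ln_add_one_self_less_self[of "x / a - 1"] assms a0 by (simp add: field_simps)
  hence "2 * ln (x / a) < 2 * (x - a) / a" using a0 by (simp add: field_simps)
  ultimately show ?thesis by linarith
qed

lemma small:
  fixes A B x :: real
  assumes "A > 2 * B" "2 * B > 1" "0 < x" "x \<le> 1"
  shows "x < A + B * ln (1 + x * ln x)"
proof -
  have lxle: "ln x \<le> 0" using assms by simp
  have u1: "- (x * ln x) \<le> 1 / exp 1"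
  proof -
    have "ln (1 / (x * exp 1)) \<le> 1 / (x * exp 1) - 1"
      using assms by (intro ln_le_minus_one) simp
    hence "- ln x - 1 \<le> 1 / (x * exp 1) - 1" using assms by (simp add: ln_div ln_mult)
    hence "- ln x \<le> 1 / (x * exp 1)" by simp
    hence "x * (- ln x) \<le> x * (1 / (x * exp 1))" using assms by (intro mult_left_mono) auto
    thus ?thesis using assms by simp
  qed
  have e2: "exp (1::real) \<ge> 2" using exp_ge_add_one_self[of 1] by simp
  have Lle: "ln (1 + x * ln x) \<le> 0"
  proof -
    have "x * ln x \<le> 0" using assms lxle by (simp add: mult_nonneg_nonpos)
    moreover have "1 + x * ln x > 0"
    proof -
      have "1 / exp 1 < (1::real)" using e2 by simp
      thus ?thesis using u1 by linarith
    qed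
    ultimately show ?thesis by simp
  qed
  have BL: "B * ln (1 + x * ln x) \<ge> (A/2) * ln (1 + x * ln x)"
    using Lle assms by (intro mult_right_mono_neg) auto
  show ?thesis
  proof (cases "x \<le> 1/2")
    case True
    have "1 / exp 1 \<le> (1::real) / 2" using e2 by (simp add: field_simps)
    hence "1 + x * ln x \<ge> exp (-1)" using u1 e2 by (simp add: exp_minus field_simps)
    moreover have "1 + x * ln x > 0" using \<open>1 / exp 1 \<le> 1/2\<close> u1 by linarith
    ultimately have "ln (1 + x * ln x) \<ge> -1" by (simp add: ln_ge_iff)
    hence "(A/2) * ln (1 + x * ln x) \<ge> -(A/2)" using assms mult_left_mono[of "-1" "ln (1 + x * ln x)" "A/2"] by simp
    thus ?thesis using BL True assms by linarith
  next
    case False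
    have "ln x \<ge> 1 - 1/x" using assms ln_lower by simp
    hence xl: "x * ln x \<ge> x * (1 - 1/x)" using assms by (intro mult_left_mono) auto
    hence "1 + x * ln x \<ge> x" using assms by (simp add: algebra_simps)
    hence "ln (1 + x * ln x) \<ge> ln x" using assms by simp
    moreover have "1 - 1/x \<ge> 2 * (x - 1)"
    proof -
      have "(1 - 1/x) = (x - 1) / x" using assms by (simp add: field_simps)
      moreover have "(x - 1) / x \<ge> 2 * (x - 1)"
      proof -
        have "(x - 1) / x - 2 * (x - 1) = ((1 - x) * (2 * x - 1)) / x" using assms by (simp add: field_simps)
        moreover have "(1 - x) * (2 * x - 1) \<ge> 0" using assms False by (intro mult_nonneg_nonneg) auto
        moreover have "((1 - x) * (2 * x - 1)) / x \<ge> 0" using calculation(2) assms by simp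
        ultimately show ?thesis by linarith
      qed
      ultimately show ?thesis by simp
    qed
    ultimately have "ln (1 + x * ln x) \<ge> 2 * (x - 1)" using \<open>ln x \<ge> 1 - 1/x\<close> by linarith
    hence "(A/2) * ln (1 + x * ln x) \<ge> (A/2) * (2 * (x - 1))" using assms by (intro mult_left_mono) auto
    hence "A + B * ln (1 + x * ln x) \<ge> A * x" using BL by (simp add: algebra_simps)
    moreover have "A * x > x" using assms by simp
    ultimately show ?thesis by linarith
  qed
qed

lemma contg: "\<And>A U B::real. A > 1 \<Longrightarrow> continuous_on {A..U} (\<lambda>t. A + B * ln (1 + t * ln t) - t)"
proof -
  fix A U B :: real assume A1: "A > 1"
    have h1: "\<forall>t\<in>{A..U}. t \<noteq> 0" using A1 by auto
    have h2: "\<forall>t\<in>{A..U}. 1 + t * ln t \<noteq> 0"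
    proof
      fix t assume "t \<in> {A..U}"
      hence t1: "t > 1" using A1 by simp
      hence "ln t > 0" by simp
      hence "t * ln t > 0" using t1 by simp
      thus "1 + t * ln t \<noteq> 0" by linarith
    qed
    have "continuous_on {A..U} (\<lambda>t. ln t)" using h1 by (intro continuous_on_ln continuous_on_id) auto
    hence "continuous_on {A..U} (\<lambda>t. 1 + t * ln t)" by (intro continuous_on_add continuous_on_mult continuous_on_const continuous_on_id)
    hence "continuous_on {A..U} (\<lambda>t. ln (1 + t * ln t))" using h2 by (rule continuous_on_ln)
    thus "continuous_on {A..U} (\<lambda>t. A + B * ln (1 + t * ln t) - t)" by (intro continuous_on_add continuous_on_diff continuous_on_mult continuous_on_const continuous_on_id)
qed

theorem lemma3:
  fixes A B :: real
  assumes "A > 2 * B" and "2 * B > 1"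
  shows "(\<exists>!x::real. x > 0 \<and> x = A + B * ln (1 + x * ln x)) \<and>
         (\<forall>x::real. x > 0 \<and> x = A + B * ln (1 + x * ln x) \<longrightarrow>
            A + B * ln (1 + A * ln A) < x \<and>
            x < A + B * ln (1 + A * ln A) * (1 + 2 * B / (A - 2 * B)))"
proof -
  define C where "C = A + B * ln (1 + A * ln A)"
  have A1: "A > 1" and B0: "B > 0" and AB: "A - 2 * B > 0" using assms by auto
  have lnA: "ln A > 0" using A1 by simp
  have pA: "1 + A * ln A > 1" using A1 lnA by simp
  have CA: "C > A" unfolding C_def using pA B0 by simp
  have gtA: "x > A" if "x > 0" "x = A + B * ln (1 + x * ln x)" for x
  proof (cases "x \<le> 1")
    case True
    then show ?thesis using small[OF assms that(1) True] that(2) by simp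
  next
    case False
    hence "ln x > 0" by simp
    hence "1 + x * ln x > 1" using False by simp
    hence "ln (1 + x * ln x) > 0" by simp
    hence "B * ln (1 + x * ln x) > 0" using B0 by simp
    thus ?thesis using that(2) by linarith
  qed
  have lower: "C < x" if "x > 0" "x = A + B * ln (1 + x * ln x)" for x
  proof -
    have xA: "x > A" using gtA[OF that] .
    have "A * ln A < x * ln x" using xA A1 lnA by (intro mult_strict_mono) auto
    hence "ln (1 + A * ln A) < ln (1 + x * ln x)" using pA by simp
    hence "B * ln (1 + A * ln A) < B * ln (1 + x * ln x)" using B0 by simp
    thus ?thesis unfolding C_def using that(2) by linarith
  qed
  have diff: "x - C < 2 * B * (x - A) / A" if "x > 0" "x = A + B * ln (1 + x * ln x)" for x
  proof -
    have xA: "x > A" using gtA[OF that] .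
    have "ln (1 + x * ln x) < ln (1 + A * ln A) + 2 * (x - A) / A"
      using keyln_strict[of A x] xA A1 by simp
    hence "B * ln (1 + x * ln x) < B * (ln (1 + A * ln A) + 2 * (x - A) / A)"
      using B0 by (intro mult_strict_left_mono) auto
    thus ?thesis unfolding C_def using that(2) by (simp add: algebra_simps)
  qed
  have upper: "x < A + B * ln (1 + A * ln A) * (1 + 2 * B / (A - 2 * B))" if "x > 0" "x = A + B * ln (1 + x * ln x)" for x
  proof -
    define D where "D = B * ln (1 + A * ln A)"
    have "x - C < 2 * B * (x - A) / A" using diff[OF that] .
    hence "(x - C) * A < 2 * B * (x - A)" using A1 by (simp add: field_simps)
    hence "(x - A) * (A - 2 * B) < D * A" unfolding C_def D_def by (simp add: algebra_simps)
    hence "x - A < D * A / (A - 2 * B)" using AB by (simp add: field_simps)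
    also have "D * A / (A - 2 * B) = D * (1 + 2 * B / (A - 2 * B))" using AB by (simp add: field_simps)
    finally show ?thesis unfolding D_def by simp
  qed
  have uniq: "x = y" if "x > 0" "x = A + B * ln (1 + x * ln x)" "y > 0" "y = A + B * ln (1 + y * ln y)" for x y
  proof (rule ccontr)
    assume ne: "x \<noteq> y"
    have key: False if "a > 0" "a = A + B * ln (1 + a * ln a)" "b > 0" "b = A + B * ln (1 + b * ln b)" "a < b" for a b
    proof -
      have aA: "a > A" using gtA[OF that(1,2)] .
      have "ln (1 + b * ln b) \<le> ln (1 + a * ln a) + 2 * (b - a) / a"
        using keyln[of a b] aA A1 that(5) by simp
      hence "B * ln (1 + b * ln b) \<le> B * (ln (1 + a * ln a) + 2 * (b - a) / a)"
        using B0 by (intro mult_left_mono) auto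
      hence "b - a \<le> 2 * B * (b - a) / a" using that(2,4) by (simp add: algebra_simps)
      also have "\<dots> < b - a"
      proof -
        have "2 * B * (b - a) < a * (b - a)" using that(5) aA assms by (intro mult_strict_right_mono) auto
        thus ?thesis using aA A1 by (simp add: field_simps)
      qed
      finally show False by simp
    qed
    show False
    proof (cases "x < y")
      case True thus ?thesis using key[OF that] by blast
    next
      case False hence "y < x" using ne by simp
      thus ?thesis using key[OF that(3,4,1,2)] by blast
    qed
  qed
  define U where "U = C * A / (A - 2 * B)"
  have UC: "U \<ge> C"
  proof -
    have "A / (A - 2 * B) \<ge> 1" using AB B0 by (simp add: field_simps)
    hence "C * (A / (A - 2 * B)) \<ge> C * 1" using CA A1 by (intro mult_left_mono) auto
    thus ?thesis unfolding U_def by simp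
  qed
  hence UA: "U \<ge> A" using CA by simp
  define g where "g t = A + B * ln (1 + t * ln t) - t" for t
  have gA: "g A \<ge> 0" unfolding g_def using pA B0 by simp
  have gU: "g U \<le> 0"
  proof -
    have "ln (1 + U * ln U) \<le> ln (1 + A * ln A) + 2 * (U - A) / A"
      using keyln[of A U] UA A1 by simp
    hence "B * ln (1 + U * ln U) \<le> B * (ln (1 + A * ln A) + 2 * (U - A) / A)"
      using B0 by (intro mult_left_mono) auto
    hence "g U \<le> C + 2 * B * (U - A) / A - U" unfolding g_def C_def by (simp add: algebra_simps)
    also have "C + 2 * B * (U - A) / A - U = - 2 * B"
    proof -
      have UE: "U * (A - 2 * B) = C * A" unfolding U_def using AB by simp
      have "2 * B * (U - A) / A - U = (2 * B * U - 2 * B * A - U * A) / A" using A1 by (simp add: field_simps)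
      also have "2 * B * U - 2 * B * A - U * A = - (U * (A - 2 * B)) - 2 * B * A" by (simp add: algebra_simps)
      also have "\<dots> = - (C * A) - 2 * B * A" using UE by simp
      also have "(- (C * A) - 2 * B * A) / A = - C - 2 * B" using A1 by (simp add: field_simps)
      finally show ?thesis by simp
    qed
    finally show ?thesis using B0 by simp
  qed
  have cont: "continuous_on {A..U} g" unfolding g_def by (rule contg[OF A1])
  obtain r where r: "A \<le> r" "r \<le> U" "g r = 0" using IVT2'[of g U 0 A, OF gU gA UA cont] by blast
  have r0: "r > 0" "r = A + B * ln (1 + r * ln r)" using r A1 unfolding g_def by auto
  have ex1: "\<exists>!x::real. x > 0 \<and> x = A + B * ln (1 + x * ln x)"
  proof (rule ex1I[where a=r])
    show "r > 0 \<and> r = A + B * ln (1 + r * ln r)" using r0 by simp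
  next
    fix y assume "y > 0 \<and> y = A + B * ln (1 + y * ln y)"
    thus "y = r" using uniq[of y r] r0 by simp
  qed
  show ?thesis
  proof (intro conjI allI impI)
    show "\<exists>!x::real. x > 0 \<and> x = A + B * ln (1 + x * ln x)" by (rule ex1)
  next
    fix x assume h: "x > 0 \<and> x = A + B * ln (1 + x * ln x)"
    show "A + B * ln (1 + A * ln A) < x" using lower[of x] h unfolding C_def by simp
    show "x < A + B * ln (1 + A * ln A) * (1 + 2 * B / (A - 2 * B))"
      using upper[of x] h by simp
  qed
qed

end
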